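(* Let $\mu$ be a probability measure on $[0,\infty)$ with mean $1$ such that $\Lambda_\mu$ is finite on a neighborhood of $0$. Let $P$ be a probability measure and $\nu$ a $\sigma$-finite positive measure with $dP=p\,d\nu$. Define $\psi:[0,\infty)\to[0,1]$ by $\psi(y)=P(p\le y)$, and assume $$\mathrm{range}(G_\mu)\subset\mathrm{range}(\psi)\cup\{1\}.$$ Define $H_\mu:[0,1]\to[0,\infty]$ by $H_\mu(\rho)=\sup\{r\in[0,\infty):G_\mu(r)\ge\rho\}$ and $\phi:[0,\infty)\to[0,\infty)$ by $\phi(y)=H_\mu(\psi(y))1_{\psi(y)>0}$. Then $Q(dx)=\phi(p(x))P(dx)$ is a probability measure, $dQ/dP$ has distribution $\mu$ under $P$, and $Q\in\mathcal{U}^\mu(P)$.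
   Context: For a probability measure $\mu$ on $[0,\infty)$ with mean $1$, $G_\mu(r)=\mu([r,\infty))$ for $r\ge0$ and $\Lambda_\mu(\lambda)=\log\big((\lambda+1)\int_0^\infty G_\mu(z)z^\lambda\,dz\big)$ for $\lambda\ge0$. With $\Lambda_Q^f(\lambda)=\log E_Q[e^{\lambda f}]$, and $\Lambda_\mu$ finite near $0$, $\mathcal{U}^\mu(P)=\{Q \text{ probability measure}: Q\ll P,\ \Lambda_Q^{\log(dQ/dP)}(\lambda)\le\Lambda_\mu(\lambda)\ \text{for all }\lambda>0\}$. *)

theory Defs
  imports "HOL-Probability.Probability"
begin

definition G_mu :: "real measure \<Rightarrow> real \<Rightarrow> real" where
  "G_mu mu r = measure mu {r..}"

definition ereal_ln :: "ennreal \<Rightarrow> ereal" where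
  "ereal_ln x = (if x = \<infinity> then \<infinity> else if x = 0 then -\<infinity> else ereal (ln (enn2real x)))"

definition Lambda_mu :: "real measure \<Rightarrow> real \<Rightarrow> ereal" where
  "Lambda_mu mu l = ereal_ln (ennreal (l + 1) *
      (\<integral>\<^sup>+ z\<in>{0..}. ennreal (G_mu mu z * z powr l) \<partial>lborel))"

definition Lambda_f :: "'a measure \<Rightarrow> ('a \<Rightarrow> real) \<Rightarrow> real \<Rightarrow> ereal" where
  "Lambda_f Q f l = ereal_ln (\<integral>\<^sup>+ x. ennreal (exp (l * f x)) \<partial>Q)"

definition U_mu :: "real measure \<Rightarrow> 'a measure \<Rightarrow> 'a measure set" where
  "U_mu mu P = {Q. prob_space Q \<and> sets Q = sets P \<and> absolutely_continuous P Q \<and>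
      (\<forall>l>0. Lambda_f Q (\<lambda>x. ln (enn2real (RN_deriv P Q x))) l \<le> Lambda_mu mu l)}"

definition psi_fun :: "'a measure \<Rightarrow> ('a \<Rightarrow> real) \<Rightarrow> real \<Rightarrow> real" where
  "psi_fun P p y = measure P {x \<in> space P. p x \<le> y}"

definition H_mu :: "real measure \<Rightarrow> real \<Rightarrow> ereal" where
  "H_mu mu rho = Sup {ereal r | r. 0 \<le> r \<and> G_mu mu r \<ge> rho}"

definition phi_fun :: "real measure \<Rightarrow> 'a measure \<Rightarrow> ('a \<Rightarrow> real) \<Rightarrow> real \<Rightarrow> real" where
  "phi_fun mu P p y = (if psi_fun P p y > 0 then real_of_ereal (H_mu mu (psi_fun P p y)) else 0)"

end

theory Submission
  imports Defs
begin


lemma measure_eqI_atLeast: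
  fixes M N :: "real measure"
  assumes sets: "sets M = sets borel" "sets N = sets borel"
  assumes fin: "\<And>x. emeasure M {x ..} < \<infinity>"
  assumes eq: "\<And>x. emeasure M {x ..} = emeasure N {x ..}"
  shows "M = N"
proof (rule measure_eqI_generator_eq_countable)
  let ?LT = "\<lambda>a::real. {a ..}" let ?E = "range ?LT"
  show "Int_stable ?E"
  proof (rule Int_stableI)
    fix A B assume "A \<in> ?E" "B \<in> ?E"
    then obtain a b where "A = {a..}" "B = {b..}" by auto
    then have "A \<inter> B = {max a b..}" by auto
    then show "A \<inter> B \<in> ?E" by blast
  qed
  show "?E \<subseteq> Pow UNIV" "sets M = sigma_sets UNIV ?E" "sets N = sigma_sets UNIV ?E"
    unfolding sets borel_Ici by auto
  show "?LT`Rats \<subseteq> ?E" "(\<Union>i\<in>Rats. ?LT i) = UNIV" "\<And>a. a \<in> ?LT`Rats \<Longrightarrow> emeasure M a \<noteq> \<infinity>"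
    using fin by (auto simp: less_top) (meson Rats_no_bot_less less_imp_le)
qed (auto intro: assms countable_rat)

locale muloc =
  fixes mu :: "real measure"
  assumes mu_prob: "prob_space mu"
    and mu_sets: "sets mu = sets borel"
    and mu_supp: "AE x in mu. 0 \<le> x"
    and mu_int: "integrable mu (\<lambda>x. x)"
    and mu_mean: "(\<integral>x. x \<partial>mu) = 1"
begin

interpretation M: prob_space mu by (rule mu_prob)

lemma space_mu: "space mu = UNIV"
  using sets_eq_imp_space_eq[OF mu_sets] by simp

lemma sets_mu_iff[simp]: "A \<in> sets mu \<longleftrightarrow> A \<in> sets borel"
  using mu_sets by simp

lemma G_mono: "r \<le> s \<Longrightarrow> G_mu mu s \<le> G_mu mu r"
  unfolding G_mu_def by (intro M.finite_measure_mono) auto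

lemma G_borel: "G_mu mu \<in> borel_measurable borel"
proof -
  have "(\<lambda>r. - G_mu mu r) \<in> borel_measurable borel"
    by (rule borel_measurable_mono) (auto simp: mono_def intro: G_mono)
  then show ?thesis by simp
qed

lemma G_nonneg: "0 \<le> G_mu mu r"
  unfolding G_mu_def by simp

lemma G_le1: "G_mu mu r \<le> 1"
  unfolding G_mu_def by simp

lemma G_nonpos: assumes "r \<le> 0" shows "G_mu mu r = 1"
proof -
  have "M.prob {x\<in>space mu. r \<le> x} = 1"
    using mu_supp assms by (subst M.prob_Collect_eq_1) (auto simp: space_mu elim!: eventually_mono)
  then show ?thesis unfolding G_mu_def space_mu by (simp add: atLeast_def)
qed

lemma G_markov: assumes "0 < r" shows "G_mu mu r \<le> 1 / r"
proof -
  have "measure mu {x\<in>space mu. x \<ge> r} \<le> (\<integral>x. x \<partial>mu) / r"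
    by (rule integral_Markov_inequality_measure[OF mu_int _ mu_supp assms, of "space mu"]) (simp add: space_mu)
  then show ?thesis unfolding G_mu_def space_mu mu_mean by (simp add: atLeast_def)
qed

lemma G_leftcont:
  assumes "\<And>n. rho \<le> G_mu mu (r - 1 / Suc n)"
  shows "rho \<le> G_mu mu r"
proof -
  let ?A = "\<lambda>n. {r - 1 / Suc n ..}"
  have dec: "decseq ?A"
    unfolding decseq_def
  proof (intro allI impI subsetI)
    fix m n :: nat and x assume mn: "m \<le> n" and x: "x \<in> ?A n"
    have "1 / real (Suc n) \<le> 1 / real (Suc m)"
      using mn by (intro divide_left_mono) auto
    then show "x \<in> ?A m" using x by auto
  qed
  have inter: "(\<Inter>n. ?A n) = {r..}"
  proof (intro equalityI subsetI)
    fix x assume "x \<in> (\<Inter>n. ?A n)"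
    then have *: "\<And>n. r - 1 / real (Suc n) \<le> x" by auto
    show "x \<in> {r..}"
    proof (rule ccontr)
      assume "x \<notin> {r..}"
      then have "0 < r - x" by simp
      then obtain n where n: "1 / real (Suc n) < r - x"
        using nat_approx_posE by blast
      with *[of n] show False by simp
    qed
  next
    fix x assume "x \<in> {r..}"
    moreover have "\<And>n. 0 \<le> 1 / real (Suc n)" by simp
    ultimately show "x \<in> (\<Inter>n. ?A n)" by (smt (verit) INT_I atLeast_iff)
  qed
  have "(\<lambda>n. measure mu (?A n)) \<longlonglongrightarrow> measure mu (\<Inter>n. ?A n)"
    by (rule Lim_measure_decseq) (use dec in auto)
  then have "(\<lambda>n. G_mu mu (r - 1 / Suc n)) \<longlonglongrightarrow> G_mu mu r"
    unfolding G_mu_def inter by simp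
  then show ?thesis
    by (rule LIMSEQ_le_const) (use assms in auto)
qed

definition SS :: "real \<Rightarrow> real set" where
  "SS rho = {r. 0 \<le> r \<and> rho \<le> G_mu mu r}"

lemma SS_props:
  assumes "0 < rho"
  shows "0 \<in> SS rho \<or> rho > 1" "bdd_above (SS rho)" "\<And>r. r \<in> SS rho \<Longrightarrow> r \<le> 1 / rho"
proof -
  show "0 \<in> SS rho \<or> rho > 1" using G_nonpos[of 0] by (auto simp: SS_def)
  show le: "\<And>r. r \<in> SS rho \<Longrightarrow> r \<le> 1 / rho"
  proof -
    fix r assume "r \<in> SS rho"
    then have r: "0 \<le> r" "rho \<le> G_mu mu r" by (auto simp: SS_def)
    show "r \<le> 1 / rho"
    proof (cases "r = 0")
      case True then show ?thesis using assms by simp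
    next
      case False
      then have "0 < r" using r by simp
      then have "rho \<le> 1 / r" using G_markov[of r] r by simp
      then show ?thesis using assms \<open>0 < r\<close> by (simp add: field_simps)
    qed
  qed
  then show "bdd_above (SS rho)" by (auto simp: bdd_above_def)
qed

lemma H_eq:
  assumes "0 < rho" "rho \<le> 1"
  shows "H_mu mu rho = ereal (Sup (SS rho))" "0 \<le> Sup (SS rho)"
proof -
  have ne: "0 \<in> SS rho" using SS_props(1)[OF assms(1)] assms by auto
  have bdd: "bdd_above (SS rho)" by (rule SS_props(2)[OF assms(1)])
  have eq: "{ereal r | r. 0 \<le> r \<and> G_mu mu r \<ge> rho} = ereal ` SS rho"
    by (auto simp: SS_def)
  have "(SUP a\<in>SS rho. ereal a) \<le> ereal (1 / rho)"
    using SS_props(3)[OF assms(1)] by (auto intro!: SUP_least)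
  moreover have "(SUP a\<in>SS rho. ereal a) \<ge> ereal 0"
    using ne by (rule SUP_upper2) simp
  ultimately have "\<bar>SUP a\<in>SS rho. ereal a\<bar> \<noteq> \<infinity>" by auto
  then show "H_mu mu rho = ereal (Sup (SS rho))"
    unfolding H_mu_def eq by (simp add: ereal_Sup)
  show "0 \<le> Sup (SS rho)" using cSup_upper[OF ne bdd] .
qed

lemma H_iff:
  assumes "0 < rho" "rho \<le> 1" "0 < r"
  shows "r \<le> real_of_ereal (H_mu mu rho) \<longleftrightarrow> rho \<le> G_mu mu r"
proof -
  have ne: "0 \<in> SS rho" using SS_props(1)[OF assms(1)] assms by auto
  have bdd: "bdd_above (SS rho)" by (rule SS_props(2)[OF assms(1)])
  have "r \<le> Sup (SS rho) \<longleftrightarrow> rho \<le> G_mu mu r"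
  proof
    assume "rho \<le> G_mu mu r"
    then have "r \<in> SS rho" using assms by (auto simp: SS_def)
    then show "r \<le> Sup (SS rho)" using bdd by (rule cSup_upper)
  next
    assume le: "r \<le> Sup (SS rho)"
    show "rho \<le> G_mu mu r"
    proof (rule G_leftcont)
      fix n
      have "r - 1 / Suc n < Sup (SS rho)" using le by (smt (verit) divide_pos_pos of_nat_0_less_iff zero_less_Suc)
      then obtain s where s: "s \<in> SS rho" "r - 1 / Suc n < s"
        using less_cSupD[of "SS rho"] ne by blast
      then have "rho \<le> G_mu mu s" by (auto simp: SS_def)
      also have "\<dots> \<le> G_mu mu (r - 1 / Suc n)" using s by (intro G_mono) simp
      finally show "rho \<le> G_mu mu (r - 1 / Suc n)" .
    qed
  qed
  then show ?thesis using H_eq[OF assms(1,2)] by simp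
qed

lemma H_nonneg:
  assumes "0 < rho" "rho \<le> 1"
  shows "0 \<le> real_of_ereal (H_mu mu rho)"
  using H_eq[OF assms] by simp

lemma H_antimono:
  assumes "0 < rho1" "rho1 \<le> rho2" "rho2 \<le> 1"
  shows "real_of_ereal (H_mu mu rho2) \<le> real_of_ereal (H_mu mu rho1)"
proof -
  have ne: "0 \<in> SS rho2" using SS_props(1)[of rho2] assms by auto
  have sub: "SS rho2 \<subseteq> SS rho1" using assms by (auto simp: SS_def)
  have "Sup (SS rho2) \<le> Sup (SS rho1)"
    using ne sub SS_props(2)[of rho1] assms by (intro cSup_subset_mono) auto
  then show ?thesis using H_eq[of rho1] H_eq[of rho2] assms by simp
qed

end


lemma psi_mono:
  assumes "prob_space P" "p \<in> borel_measurable P" "a \<le> b"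
  shows "psi_fun P p a \<le> psi_fun P p b"
proof -
  interpret prob_space P by fact
  show ?thesis unfolding psi_fun_def
    using assms(2,3) by (intro finite_measure_mono) auto
qed

lemma psi_bounds:
  assumes "prob_space P"
  shows "0 \<le> psi_fun P p a" "psi_fun P p a \<le> 1"
proof -
  interpret prob_space P by fact
  show "0 \<le> psi_fun P p a" "psi_fun P p a \<le> 1" unfolding psi_fun_def by auto
qed

lemma psi_borel:
  assumes "prob_space P" "p \<in> borel_measurable P"
  shows "psi_fun P p \<in> borel_measurable borel"
  by (rule borel_measurable_mono) (use psi_mono[OF assms] in \<open>auto simp: mono_def\<close>)

lemma psi_claim:
  fixes P :: "'a measure" and p :: "'a \<Rightarrow> real"
  assumes PP: "prob_space P" and pm: "p \<in> borel_measurable P"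
  shows "measure P {x\<in>space P. psi_fun P p (p x) \<le> psi_fun P p y} = psi_fun P p y"
proof -
  interpret prob_space P by fact
  let ?F = "psi_fun P p"
  have Fm: "?F \<in> borel_measurable borel" by (rule psi_borel[OF PP pm])
  have Fmono: "\<And>a b. a \<le> b \<Longrightarrow> ?F a \<le> ?F b" by (rule psi_mono[OF PP pm])
  have null: "{x\<in>space P. y < p x \<and> p x \<le> q} \<in> null_sets P" if q: "y \<le> q" "?F q = ?F y" for q
  proof -
    have eq: "{x\<in>space P. y < p x \<and> p x \<le> q} = {x\<in>space P. p x \<le> q} - {x\<in>space P. p x \<le> y}"
      by auto
    have "measure P {x\<in>space P. y < p x \<and> p x \<le> q} = ?F q - ?F y"
      unfolding eq psi_fun_def using pm q(1) by (intro finite_measure_Diff) auto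
    then have "measure P {x\<in>space P. y < p x \<and> p x \<le> q} = 0" using q by simp
    moreover have "{x\<in>space P. y < p x \<and> p x \<le> q} \<in> sets P" using pm by measurable
    ultimately show ?thesis by (simp add: emeasure_eq_measure null_sets_def)
  qed
  define A' where "A' = {z. y < z \<and> ?F z = ?F y}"
  define C where "C = {q\<in>A'. q \<in> \<rat>} \<union> {q\<in>A'. \<forall>z\<in>A'. z \<le> q}"
  have fin: "finite {q\<in>A'. \<forall>z\<in>A'. z \<le> q}"
  proof (cases "{q\<in>A'. \<forall>z\<in>A'. z \<le> q} = {}")
    case False
    then obtain a where a: "a \<in> {q\<in>A'. \<forall>z\<in>A'. z \<le> q}" by blast
    then have "{q\<in>A'. \<forall>z\<in>A'. z \<le> q} \<subseteq> {a}" by (auto intro: antisym)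
    then show ?thesis by (rule finite_subset) simp
  next
    case True then show ?thesis by (simp only: finite.emptyI)
  qed
  have cC: "countable C"
    unfolding C_def
    by (intro countable_Un countable_finite[OF fin] countable_subset[OF _ countable_rat]) auto
  have AE1: "AE x in P. \<forall>q\<in>C. \<not> (y < p x \<and> p x \<le> q)"
  proof (rule AE_ball_countable'[OF _ cC])
    fix q assume "q \<in> C"
    then have "y \<le> q" "?F q = ?F y" by (auto simp: C_def A'_def)
    from null[OF this] show "AE x in P. \<not> (y < p x \<and> p x \<le> q)"
      by (rule AE_I') auto
  qed
  have AE2: "AE x in P. (?F (p x) \<le> ?F y \<longleftrightarrow> p x \<le> y)"
    using AE1
  proof (rule eventually_mono)
    fix x assume H: "\<forall>q\<in>C. \<not> (y < p x \<and> p x \<le> q)"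
    show "?F (p x) \<le> ?F y \<longleftrightarrow> p x \<le> y"
    proof
      assume "p x \<le> y" then show "?F (p x) \<le> ?F y" by (rule Fmono)
    next
      assume le: "?F (p x) \<le> ?F y"
      show "p x \<le> y"
      proof (rule ccontr)
        assume "\<not> p x \<le> y"
        then have gt: "y < p x" by simp
        then have "?F y \<le> ?F (p x)" by (intro Fmono) simp
        with le gt have pA: "p x \<in> A'" by (auto simp: A'_def)
        show False
        proof (cases "\<forall>z\<in>A'. z \<le> p x")
          case True
          then have "p x \<in> C" using pA by (auto simp: C_def)
          with H gt show False by auto
        next
          case False
          then obtain z where z: "z \<in> A'" "p x < z" by (auto simp: not_le)
          obtain q where q: "q \<in> \<rat>" "p x < q" "q < z"
            using Rats_dense_in_real[OF z(2)] by blast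
          have "?F y \<le> ?F q" using gt q by (intro Fmono) simp
          moreover have "?F q \<le> ?F z" using q by (intro Fmono) simp
          ultimately have "q \<in> A'" using z gt q by (auto simp: A'_def)
          then have "q \<in> C" using q by (auto simp: C_def)
          with H gt q show False by auto
        qed
      qed
    qed
  qed
  have "measure P {x\<in>space P. ?F (p x) \<le> ?F y} = measure P {x\<in>space P. p x \<le> y}"
    by (rule measure_eq_AE) (use AE2 pm Fm in auto)
  then show ?thesis unfolding psi_fun_def[of P p y] by simp
qed



lemma FTC_powr:
  fixes l t :: real
  assumes "0 < l" "0 \<le> t"
  shows "(\<integral>\<^sup>+ z. ennreal ((l+1) * z powr l) * indicator {0..t} z \<partial>lborel) = ennreal (t powr (l+1))"
proof -
  have "((\<lambda>z. (l+1) * z powr l) has_integral (t powr (l+1) - 0 powr (l+1))) {0..t}"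
  proof (rule fundamental_theorem_of_calculus_interior[OF assms(2)])
    show "continuous_on {0..t} (\<lambda>z. z powr (l + 1))"
      using assms by (intro continuous_on_powr') (auto intro: continuous_intros)
    fix x assume "x \<in> {0<..<t}"
    then have "0 < x" by simp
    then have "((\<lambda>z. z powr (l + 1)) has_real_derivative (l+1) * x powr (l + 1 - 1)) (at x)"
      by (rule has_real_derivative_powr)
    then show "((\<lambda>z. z powr (l + 1)) has_vector_derivative (l+1) * x powr l) (at x)"
      by (simp add: has_real_derivative_iff_has_vector_derivative)
  qed
  then have "((\<lambda>z. (l+1) * z powr l) has_integral (t powr (l+1))) {0..t}" by simp
  from nn_integral_has_integral_lebesgue'[OF _ this] show ?thesis
    using assms by auto
qed

context muloc begin

interpretation M: prob_space mu by (rule mu_prob)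

lemma layer_cake:
  assumes l: "0 < l"
  shows "(\<integral>\<^sup>+ t. ennreal (t powr (l+1)) \<partial>mu)
        = ennreal (l+1) * (\<integral>\<^sup>+ z\<in>{0..}. ennreal (G_mu mu z * z powr l) \<partial>lborel)"
proof -
  define f where "f t z = (if 0 \<le> z \<and> z \<le> t then ennreal ((l+1) * z powr l) else 0)" for t z :: real
  have f_ind: "f t z = ennreal ((l+1) * z powr l) * indicator {0..t} z" for t z
    by (simp add: f_def indicator_def)
  have f_ind2: "f t z = ennreal ((l+1) * z powr l) * indicator {0..} z * indicator {z..} t" for t z
    by (simp add: f_def indicator_def)
  have "(\<integral>\<^sup>+ t. ennreal (t powr (l+1)) \<partial>mu) = (\<integral>\<^sup>+ t. (\<integral>\<^sup>+ z. f t z \<partial>lborel) \<partial>mu)"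
  proof (rule nn_integral_cong_AE)
    show "AE t in mu. ennreal (t powr (l+1)) = (\<integral>\<^sup>+ z. f t z \<partial>lborel)"
      using mu_supp by eventually_elim (simp add: f_ind FTC_powr[OF l])
  qed
  also have "\<dots> = (\<integral>\<^sup>+ z. (\<integral>\<^sup>+ t. f t z \<partial>mu) \<partial>lborel)"
  proof -
    interpret pair_sigma_finite mu lborel
      by (intro pair_sigma_finite.intro M.sigma_finite_measure_axioms lborel.sigma_finite_measure_axioms)
    have meas: "case_prod f \<in> borel_measurable (borel \<Otimes>\<^sub>M borel)"
      unfolding f_def by measurable
    have "sets (mu \<Otimes>\<^sub>M lborel) = sets (borel \<Otimes>\<^sub>M borel)"
      by (rule sets_pair_measure_cong[OF mu_sets sets_lborel])
    then have "case_prod f \<in> borel_measurable (mu \<Otimes>\<^sub>M lborel)"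
      using meas by (subst measurable_cong_sets[OF _ refl])
    then show ?thesis by (rule Fubini'[symmetric])
  qed
  also have "\<dots> = (\<integral>\<^sup>+ z. ennreal (l+1) * (ennreal (G_mu mu z * z powr l) * indicator {0..} z) \<partial>lborel)"
  proof (rule nn_integral_cong)
    fix z :: real
    have "(\<integral>\<^sup>+ t. f t z \<partial>mu) = (ennreal ((l+1) * z powr l) * indicator {0..} z) * emeasure mu {z..}"
      unfolding f_ind2 by (rule nn_integral_cmult_indicator) simp
    also have "\<dots> = ennreal (l+1) * (ennreal (G_mu mu z * z powr l) * indicator {0..} z)"
    proof (cases "0 \<le> z")
      case True
      have "ennreal ((l+1) * z powr l) * emeasure mu {z..} = ennreal ((l+1) * z powr l) * ennreal (G_mu mu z)"
        by (simp add: G_mu_def M.emeasure_eq_measure)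
      also have "\<dots> = ennreal ((l+1) * z powr l * G_mu mu z)"
        using l by (intro ennreal_mult[symmetric]) (auto simp: G_mu_def)
      also have "\<dots> = ennreal ((l+1) * (G_mu mu z * z powr l))" by (simp add: mult_ac)
      also have "\<dots> = ennreal (l+1) * ennreal (G_mu mu z * z powr l)"
        using l by (intro ennreal_mult) (auto simp: G_mu_def)
      finally show ?thesis using True by simp
    qed simp
    finally show "(\<integral>\<^sup>+ t. f t z \<partial>mu) = ennreal (l+1) * (ennreal (G_mu mu z * z powr l) * indicator {0..} z)" .
  qed
  also have "\<dots> = ennreal (l+1) * (\<integral>\<^sup>+ z\<in>{0..}. ennreal (G_mu mu z * z powr l) \<partial>lborel)"
    using G_borel by (intro nn_integral_cmult) auto
  finally show ?thesis .
qed

end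


theorem mainTheorem5:
  fixes mu :: "real measure" and nu :: "'a measure" and p :: "'a \<Rightarrow> real" and P :: "'a measure"
  assumes mu_prob: "prob_space mu"
    and mu_sets: "sets mu = sets borel"
    and mu_supp: "AE x in mu. 0 \<le> x"
    and mu_int: "integrable mu (\<lambda>x. x)"
    and mu_mean: "(\<integral>x. x \<partial>mu) = 1"
    and mu_Lambda: "\<exists>e>0. \<forall>l\<in>{0..<e}. \<bar>Lambda_mu mu l\<bar> \<noteq> \<infinity>"
    and nu_sf: "sigma_finite_measure nu"
    and p_meas: "p \<in> borel_measurable nu"
    and p_nonneg: "\<forall>x\<in>space nu. 0 \<le> p x"
    and P_def: "P = density nu (\<lambda>x. ennreal (p x))"
    and P_prob: "prob_space P"
    and range_cond: "G_mu mu ` {0..} \<subseteq> psi_fun P p ` {0..} \<union> {1}"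
  shows "let Q = density P (\<lambda>x. ennreal (phi_fun mu P p (p x))) in
           prob_space Q \<and> distr P borel (\<lambda>x. phi_fun mu P p (p x)) = mu \<and> Q \<in> U_mu mu P"
proof -
  interpret mu: muloc mu
    by (rule muloc.intro) (fact mu_prob mu_sets mu_supp mu_int mu_mean)+
  interpret M: prob_space mu by (rule mu_prob)
  interpret PP: prob_space P by (rule P_prob)
  have spP: "space P = space nu" using P_def by simp
  have setsP: "sets P = sets nu" using P_def by simp
  have pP[measurable]: "p \<in> borel_measurable P"
    by (subst measurable_cong_sets[OF setsP refl]) (rule p_meas)
  define F where "F = psi_fun P p"
  define g where "g = (\<lambda>x. phi_fun mu P p (p x))"
  have F01: "0 \<le> F y" "F y \<le> 1" for y
    unfolding F_def using psi_bounds[OF P_prob] by auto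
  have Fm[measurable]: "F \<in> borel_measurable borel"
    unfolding F_def by (rule psi_borel[OF P_prob pP])
  have F0: "F 0 = 0"
  proof -
    have A: "{x\<in>space nu. p x \<le> 0} \<in> sets nu" using p_meas by measurable
    have "emeasure P {x\<in>space P. p x \<le> 0} = (\<integral>\<^sup>+ x. ennreal (p x) * indicator {x\<in>space nu. p x \<le> 0} x \<partial>nu)"
      unfolding spP unfolding P_def using p_meas A by (subst emeasure_density) auto
    also have "\<dots> = (\<integral>\<^sup>+ x. 0 \<partial>nu)"
    proof (rule nn_integral_cong)
      fix x assume "x \<in> space nu"
      then show "ennreal (p x) * indicator {x\<in>space nu. p x \<le> 0} x = 0"
        using p_nonneg by (auto simp: indicator_def)
    qed
    finally have "emeasure P {x\<in>space P. p x \<le> 0} = 0" by simp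
    then show ?thesis unfolding F_def psi_fun_def by (simp add: PP.emeasure_eq_measure)
  qed
  have Fclaim: "measure P {x\<in>space P. F (p x) \<le> F y} = F y" for y
    unfolding F_def by (rule psi_claim[OF P_prob pP])
  have Fzero: "measure P {x\<in>space P. F (p x) \<le> 0} = 0"
    using Fclaim[of 0] unfolding F0 .
  define k where "k = (\<lambda>rho. real_of_ereal (H_mu mu rho))"
  have g_alt: "g x = indicator {0<..1} (F (p x)) *\<^sub>R k (F (p x))" for x
    using F01 unfolding g_def phi_fun_def k_def F_def by (auto simp: indicator_def)
  have km: "(\<lambda>rho. indicator {0<..1} rho *\<^sub>R k rho) \<in> borel_measurable borel"
  proof -
    have "mono_on {0<..1} (\<lambda>rho. - k rho)"
      unfolding k_def by (auto simp: mono_on_def intro!: mu.H_antimono)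
    then have "(\<lambda>rho. - k rho) \<in> borel_measurable (restrict_space borel {0<..1})"
      by (rule borel_measurable_mono_on_fnc)
    then have "k \<in> borel_measurable (restrict_space borel {0<..1})" by simp
    then show ?thesis
      by (subst borel_measurable_restrict_space_iff[symmetric]) auto
  qed
  have gm[measurable]: "g \<in> borel_measurable P"
  proof -
    have "(\<lambda>x. indicator {0<..1} (F (p x)) *\<^sub>R k (F (p x))) \<in> borel_measurable P"
      using measurable_compose[OF measurable_compose[OF pP Fm] km] by simp
    then show ?thesis unfolding g_alt[abs_def] .
  qed
  have g_nonneg: "0 \<le> g x" for x
    unfolding g_alt k_def using mu.H_nonneg by (auto simp: indicator_def)
  have g_ge: "r \<le> g x \<longleftrightarrow> 0 < F (p x) \<and> F (p x) \<le> G_mu mu r" if r: "0 < r" for r x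
  proof (cases "0 < F (p x)")
    case True
    then show ?thesis using mu.H_iff[OF True F01(2) r]
      unfolding g_def phi_fun_def F_def by simp
  next
    case False
    then show ?thesis using r unfolding g_def phi_fun_def F_def by simp
  qed
  have meas_ge: "measure P {x\<in>space P. r \<le> g x} = G_mu mu r" for r
  proof (cases "0 < r")
    case False
    then have "{x\<in>space P. r \<le> g x} = space P" using g_nonneg by (auto intro: order.trans[of r 0])
    then show ?thesis using mu.G_nonpos[of r] False by (simp add: PP.prob_space)
  next
    case True
    have eq: "{x\<in>space P. r \<le> g x} = {x\<in>space P. F (p x) \<le> G_mu mu r} - {x\<in>space P. F (p x) \<le> 0}"
      using g_ge[OF True] by auto
    have "measure P {x\<in>space P. r \<le> g x} = measure P {x\<in>space P. F (p x) \<le> G_mu mu r} - measure P {x\<in>space P. F (p x) \<le> 0}"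
      unfolding eq by (rule PP.finite_measure_Diff) (auto intro: order.trans[OF _ mu.G_nonneg])
    also have "\<dots> = measure P {x\<in>space P. F (p x) \<le> G_mu mu r}" using Fzero by simp
    also have "\<dots> = G_mu mu r"
    proof -
      have "G_mu mu r \<in> G_mu mu ` {0..}" using True by auto
      with range_cond have "G_mu mu r \<in> F ` {0..} \<or> G_mu mu r = 1" unfolding F_def by auto
      then show ?thesis
      proof
        assume "G_mu mu r \<in> F ` {0..}"
        then obtain y where "G_mu mu r = F y" by auto
        then show ?thesis using Fclaim[of y] by simp
      next
        assume G1: "G_mu mu r = 1"
        then have "{x\<in>space P. F (p x) \<le> G_mu mu r} = space P" using F01 by auto
        then show ?thesis using G1 by (simp add: PP.prob_space)
      qed
    qed
    finally show ?thesis .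
  qed
  have distr_eq: "distr P borel g = mu"
  proof (rule measure_eqI_atLeast)
    show "sets (distr P borel g) = sets borel" "sets mu = sets borel" by (simp_all add: mu_sets)
    interpret D: prob_space "distr P borel g" by (rule PP.prob_space_distr) simp
    show "emeasure (distr P borel g) {x..} < \<infinity>" for x by (simp add: D.emeasure_eq_measure)
    fix r :: real
    have "emeasure (distr P borel g) {r..} = emeasure P (g -` {r..} \<inter> space P)"
      by (rule emeasure_distr) auto
    also have "g -` {r..} \<inter> space P = {x\<in>space P. r \<le> g x}" by auto
    also have "emeasure P {x\<in>space P. r \<le> g x} = ennreal (G_mu mu r)"
      using meas_ge[of r] by (simp add: PP.emeasure_eq_measure)
    also have "\<dots> = emeasure mu {r..}" by (simp add: G_mu_def M.emeasure_eq_measure)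
    finally show "emeasure (distr P borel g) {r..} = emeasure mu {r..}" .
  qed
  define Q where "Q = density P (\<lambda>x. ennreal (g x))"
  have int_g: "(\<integral>\<^sup>+ x. ennreal (g x) \<partial>P) = 1"
  proof -
    have "(\<integral>\<^sup>+ x. ennreal (g x) \<partial>P) = (\<integral>\<^sup>+ t. ennreal t \<partial>distr P borel g)"
      by (rule nn_integral_distr[symmetric]) auto
    also have "\<dots> = (\<integral>\<^sup>+ t. ennreal t \<partial>mu)" unfolding distr_eq ..
    also have "\<dots> = 1" using nn_integral_eq_integral[OF mu_int mu_supp] mu_mean by simp
    finally show ?thesis .
  qed
  have Qprob: "prob_space Q"
  proof (rule prob_spaceI)
    have "emeasure Q (space Q) = (\<integral>\<^sup>+ x. ennreal (g x) * indicator (space P) x \<partial>P)"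
      unfolding Q_def by (subst emeasure_density) auto
    also have "\<dots> = (\<integral>\<^sup>+ x. ennreal (g x) \<partial>P)"
      by (rule nn_integral_cong) auto
    finally show "emeasure Q (space Q) = 1" using int_g by simp
  qed
  have Lam: "Lambda_f Q (\<lambda>x. ln (enn2real (RN_deriv P Q x))) l \<le> Lambda_mu mu l" if l: "0 < l" for l
  proof -
    have AE: "AE x in P. ennreal (g x) = RN_deriv P Q x"
      by (rule PP.RN_deriv_unique) (auto simp: Q_def)
    have "(\<integral>\<^sup>+ x. ennreal (exp (l * ln (enn2real (RN_deriv P Q x)))) \<partial>Q)
        = (\<integral>\<^sup>+ x. ennreal (g x) * ennreal (exp (l * ln (enn2real (RN_deriv P Q x)))) \<partial>P)"
      unfolding Q_def by (rule nn_integral_density) auto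
    also have "\<dots> = (\<integral>\<^sup>+ x. ennreal (g x powr (l+1)) \<partial>P)"
    proof (rule nn_integral_cong_AE)
      show "AE x in P. ennreal (g x) * ennreal (exp (l * ln (enn2real (RN_deriv P Q x)))) = ennreal (g x powr (l+1))"
        using AE
      proof (rule eventually_mono)
        fix x assume H: "ennreal (g x) = RN_deriv P Q x"
        have "enn2real (RN_deriv P Q x) = g x" using H[symmetric] g_nonneg[of x] by simp
        moreover have "ennreal (g x) * ennreal (exp (l * ln (g x))) = ennreal (g x powr (l+1))"
        proof (cases "g x = 0")
          case True then show ?thesis by simp
        next
          case False
          then have gp: "0 < g x" using g_nonneg[of x] by simp
          have "g x * exp (l * ln (g x)) = exp (ln (g x)) * exp (l * ln (g x))" using gp by simp
          also have "\<dots> = exp ((l+1) * ln (g x))" by (simp add: exp_add[symmetric] algebra_simps)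
          also have "\<dots> = g x powr (l+1)" using gp by (simp add: powr_def)
          finally have "g x * exp (l * ln (g x)) = g x powr (l+1)" .
          then show ?thesis using gp by (simp add: ennreal_mult[symmetric])
        qed
        ultimately show "ennreal (g x) * ennreal (exp (l * ln (enn2real (RN_deriv P Q x)))) = ennreal (g x powr (l+1))"
          by simp
      qed
    qed
    also have "\<dots> = (\<integral>\<^sup>+ t. ennreal (t powr (l+1)) \<partial>distr P borel g)"
      by (rule nn_integral_distr[symmetric]) auto
    also have "\<dots> = (\<integral>\<^sup>+ t. ennreal (t powr (l+1)) \<partial>mu)" unfolding distr_eq ..
    also have "\<dots> = ennreal (l+1) * (\<integral>\<^sup>+ z\<in>{0..}. ennreal (G_mu mu z * z powr l) \<partial>lborel)"
      by (rule mu.layer_cake[OF l])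
    finally have "Lambda_f Q (\<lambda>x. ln (enn2real (RN_deriv P Q x))) l = Lambda_mu mu l"
      unfolding Lambda_f_def Lambda_mu_def by simp
    then show ?thesis by simp
  qed
  have "Q \<in> U_mu mu P"
    unfolding U_mu_def
    using Qprob Lam by (auto simp: Q_def intro!: absolutely_continuousI_density)
  then show ?thesis
    using Qprob distr_eq unfolding Let_def Q_def g_def by simp
qed


end
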